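(* Let $\mathcal V\subset(\mathbb{R}\cup\{-\infty\})^n$ be a finite set of vectors, none identically $-\infty$, such that for each $l\in[n]$ there is $v\in\mathcal V$ with $v_l\neq-\infty$, and let $\mathcal V=\bigcup_{i\in[n]}\mathcal V_i$ be a partition into nonempty sets. For $i\in[n]$ define $T^{\mathrm{ty},i}$ by $$T^{\mathrm{ty},i}_l(x)=\begin{cases}\inf_{v\in\mathcal V_i,\,v_i\neq-\infty}\{-v_i+\max_{j\neq i}(v_j+x_j)\}, & l=i,\\ \inf_{v\in\mathcal V_i,\,v_l\neq-\infty}\{-v_l+v_i\}+x_i, & l\neq i,\end{cases}$$ and let $T^{\mathrm{ty}}_l(x)=\min_{i\in[n]}T^{\mathrm{ty},i}_l(x)$. Then $$\min_{a}\max_{i\in[n]}\operatorname{dist}_H(\mathcal V_i,\mathcal H^i_a)=-\rho(T^{\mathrm{ty}}),$$ where the minimum is over $a\in(\mathbb{R}\cup\{-\infty\})^n$ not identically $-\infty$, and the minimum is achieved by any such $a$ with $T^{\mathrm{ty}}(a)\ge\rho(T^{\mathrm{ty}})+a$.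
   Context: $-\infty+c=-\infty$, $\max\emptyset=-\infty$, $\inf\emptyset=+\infty$. For $i\in[n]$, $\mathcal H^i_a=\{y\in(\mathbb{R}\cup\{-\infty\})^n: a_i+y_i=\max_{j\neq i}(a_j+y_j)\}$. Hilbert's projective metric $d(x,y)=\inf\{\lambda-\mu:\lambda,\mu\in\mathbb{R},\ \mu+y_l\le x_l\le\lambda+y_l\ \forall l\}\in[0,+\infty]$; $\operatorname{dist}_H(A,B)=\sup_{x\in A}\inf_{y\in B}d(x,y)$. $\rho(T)=\sup\{\lambda\in\mathbb{R}\cup\{-\infty\}:\exists u\not\equiv-\infty,\ T(u)=\lambda+u\}$. *)

theory Defs
  imports "HOL-Analysis.Analysis" "HOL-Library.Extended_Real"
begin

text \<open>Vectors in (R \<union> {-\<infinity>})^n, with index set the finite type 'n.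
  We use ereal and require that no coordinate is +\<infinity>.\<close>

definition tvec :: "('n \<Rightarrow> ereal) \<Rightarrow> bool" where
  "tvec x \<longleftrightarrow> (\<forall>l. x l \<noteq> \<infinity>)"

definition allneg :: "'n \<Rightarrow> ereal" where
  "allneg = (\<lambda>_. - \<infinity>)"

definition hyp :: "'n \<Rightarrow> ('n \<Rightarrow> ereal) \<Rightarrow> ('n \<Rightarrow> ereal) set" where
  "hyp i a = {y. tvec y \<and> a i + y i = Sup {a j + y j | j. j \<noteq> i}}"

text \<open>Hilbert's projective metric (Inf of empty set = +\<infinity>).\<close>
definition hilbert_d :: "('n \<Rightarrow> ereal) \<Rightarrow> ('n \<Rightarrow> ereal) \<Rightarrow> ereal" where
  "hilbert_d x y = Inf {ereal (lam - mu) | lam mu.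
      \<forall>l. ereal mu + y l \<le> x l \<and> x l \<le> ereal lam + y l}"

definition distH :: "('n \<Rightarrow> ereal) set \<Rightarrow> ('n \<Rightarrow> ereal) set \<Rightarrow> ereal" where
  "distH A B = (SUP x\<in>A. INF y\<in>B. hilbert_d x y)"

definition spec_rad :: "(('n \<Rightarrow> ereal) \<Rightarrow> ('n \<Rightarrow> ereal)) \<Rightarrow> ereal" where
  "spec_rad T = Sup {lam. lam \<noteq> \<infinity> \<and>
      (\<exists>u. tvec u \<and> u \<noteq> allneg \<and> T u = (\<lambda>l. lam + u l))}"

definition Tty_i :: "('n \<Rightarrow> ('n \<Rightarrow> ereal) set) \<Rightarrow> 'n \<Rightarrow> ('n \<Rightarrow> ereal) \<Rightarrow> ('n \<Rightarrow> ereal)" where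
  "Tty_i V i x = (\<lambda>l.
     if l = i then
       Inf {- v i + Sup {v j + x j | j. j \<noteq> i} | v. v \<in> V i \<and> v i \<noteq> - \<infinity>}
     else
       Inf {- v l + v i | v. v \<in> V i \<and> v l \<noteq> - \<infinity>} + x i)"

definition Tty :: "('n \<Rightarrow> ('n \<Rightarrow> ereal) set) \<Rightarrow> ('n \<Rightarrow> ereal) \<Rightarrow> ('n \<Rightarrow> ereal)" where
  "Tty V x = (\<lambda>l. INF i. Tty_i V i x l)"

end

theory Submission
  imports Defs
begin


definition E :: "ereal \<Rightarrow> real" where
  "E x = (case x of ereal r \<Rightarrow> exp r | _ \<Rightarrow> 0)"

definition Lr :: "real \<Rightarrow> ereal" where
  "Lr t = (if 0 < t then ereal (ln t) else - \<infinity>)"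

lemma ereal_Sup_empty': "Sup ({}::ereal set) = -\<infinity>" by (metis Sup_empty bot_ereal_def)
lemma ereal_Inf_empty': "Inf ({}::ereal set) = \<infinity>" by (metis Inf_empty top_ereal_def)

lemma E_ereal[simp]: "E (ereal r) = exp r" by (simp add: E_def)
lemma E_minf[simp]: "E (-\<infinity>) = 0" by (simp add: E_def)
lemma E_nonneg[simp]: "0 \<le> E x" by (cases x) (auto simp: E_def)
lemma Lr_not_inf[simp]: "Lr t \<noteq> \<infinity>" by (simp add: Lr_def)
lemma E_Lr[simp]: "0 \<le> t \<Longrightarrow> E (Lr t) = t" by (auto simp: Lr_def)
lemma Lr_E[simp]: "x \<noteq> \<infinity> \<Longrightarrow> Lr (E x) = x" by (cases x) (auto simp: Lr_def)
lemma E_pos_iff: "x \<noteq> \<infinity> \<Longrightarrow> 0 < E x \<longleftrightarrow> x \<noteq> -\<infinity>" by (cases x) auto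
lemma E_mono: "x \<le> y \<Longrightarrow> y \<noteq> \<infinity> \<Longrightarrow> E x \<le> E y" by (cases x; cases y) auto
lemma E_add: "x \<noteq> \<infinity> \<Longrightarrow> y \<noteq> \<infinity> \<Longrightarrow> E (x + y) = E x * E y"
  by (cases x; cases y) (auto simp: exp_add)
lemma E_uminus: "x \<noteq> \<infinity> \<Longrightarrow> x \<noteq> -\<infinity> \<Longrightarrow> E (- x) = 1 / E x"
  by (cases x) (auto simp: exp_minus field_simps)
lemma E_inj: "x \<noteq> \<infinity> \<Longrightarrow> y \<noteq> \<infinity> \<Longrightarrow> E x = E y \<Longrightarrow> x = y"
  by (metis Lr_E)
lemma E_Min: "finite A \<Longrightarrow> A \<noteq> {} \<Longrightarrow> \<infinity> \<notin> A \<Longrightarrow> E (Min A) = Min (E ` A)"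
proof -
  assume A: "finite A" "A \<noteq> {}" "\<infinity> \<notin> A"
  have "Min A \<in> A" using A by simp
  show ?thesis
  proof (rule sym, rule Min_eqI)
    show "finite (E ` A)" using A by simp
    show "E (Min A) \<in> E ` A" using \<open>Min A \<in> A\<close> by simp
    fix y assume "y \<in> E ` A"
    then obtain a where "a \<in> A" "y = E a" by auto
    then show "E (Min A) \<le> y" using A by (metis E_mono Min_le)
  qed
qed
lemma E_Max: "finite A \<Longrightarrow> A \<noteq> {} \<Longrightarrow> \<infinity> \<notin> A \<Longrightarrow> E (Max A) = Max (E ` A)"
proof -
  assume A: "finite A" "A \<noteq> {}" "\<infinity> \<notin> A"
  have "Max A \<in> A" using A by simp
  show ?thesis
  proof (rule sym, rule Max_eqI)
    show "finite (E ` A)" using A by simp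
    show "E (Max A) \<in> E ` A" using \<open>Max A \<in> A\<close> by simp
    fix y assume "y \<in> E ` A"
    then obtain a where "a \<in> A" "y = E a" by auto
    then show "y \<le> E (Max A)" using A \<open>Max A \<in> A\<close> by (metis E_mono Max_ge)
  qed
qed

lemma Min_img_mono:
  fixes f g :: "'a \<Rightarrow> 'b::linorder"
  assumes "finite K" "K \<noteq> {}" "\<And>k. k \<in> K \<Longrightarrow> f k \<le> g k"
  shows "Min (f ` K) \<le> Min (g ` K)"
proof -
  have "Min (g ` K) \<in> g ` K" using assms by simp
  then obtain k where "k \<in> K" "Min (g ` K) = g k" by auto
  then show ?thesis using assms by (metis Min_le finite_imageI image_eqI order_trans)
qed

lemma Max_img_mono:
  fixes f g :: "'a \<Rightarrow> 'b::linorder"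
  assumes "finite K" "K \<noteq> {}" "\<And>k. k \<in> K \<Longrightarrow> f k \<le> g k"
  shows "Max (f ` K) \<le> Max (g ` K)"
proof -
  have "Max (f ` K) \<in> f ` K" using assms by simp
  then obtain k where "k \<in> K" "Max (f ` K) = f k" by auto
  then show ?thesis using assms by (metis Max_ge finite_imageI image_eqI order_trans)
qed

lemma continuous_on_Min_img:
  fixes f :: "'k \<Rightarrow> 'a::topological_space \<Rightarrow> real"
  assumes "finite K" "K \<noteq> {}" "\<And>k. k \<in> K \<Longrightarrow> continuous_on S (f k)"
  shows "continuous_on S (\<lambda>y. Min ((\<lambda>k. f k y) ` K))"
  using assms
proof (induction K rule: finite_ne_induct)
  case (singleton x) then show ?case by simp
next
  case (insert x F)
  have "continuous_on S (\<lambda>y. min (f x y) (Min ((\<lambda>k. f k y) ` F)))"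
    using insert by (intro continuous_on_min) auto
  moreover have "(\<lambda>y. Min ((\<lambda>k. f k y) ` insert x F)) = (\<lambda>y. min (f x y) (Min ((\<lambda>k. f k y) ` F)))"
    using insert by (auto simp: Min_insert)
  ultimately show ?case by (metis image_insert)
qed

lemma continuous_on_Max_img:
  fixes f :: "'k \<Rightarrow> 'a::topological_space \<Rightarrow> real"
  assumes "finite K" "K \<noteq> {}" "\<And>k. k \<in> K \<Longrightarrow> continuous_on S (f k)"
  shows "continuous_on S (\<lambda>y. Max ((\<lambda>k. f k y) ` K))"
  using assms
proof (induction K rule: finite_ne_induct)
  case (singleton x) then show ?case by simp
next
  case (insert x F)
  have "continuous_on S (\<lambda>y. max (f x y) (Max ((\<lambda>k. f k y) ` F)))"
    using insert by (intro continuous_on_max) auto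
  moreover have "(\<lambda>y. Max ((\<lambda>k. f k y) ` insert x F)) = (\<lambda>y. max (f x y) (Max ((\<lambda>k. f k y) ` F)))"
    using insert by (auto simp: Max_insert)
  ultimately show ?case by (metis image_insert)
qed


definition smplx :: "(real^'n::finite) set" where
  "smplx = {y. (\<forall>i. 0 \<le> y$i) \<and> (\<Sum>i\<in>UNIV. y$i) = 1}"

lemma smplx_le1: "y \<in> smplx \<Longrightarrow> y$i \<le> 1"
proof -
  assume "y \<in> smplx"
  then have "\<forall>i. 0 \<le> y$i" "(\<Sum>i\<in>UNIV. y$i) = 1" by (auto simp: smplx_def)
  then show ?thesis using member_le_sum[of i UNIV "\<lambda>i. y$i"] by auto
qed

lemma smplx_compact: "compact (smplx :: (real^'n::finite) set)"
proof -
  have "closed (smplx :: (real^'n::finite) set)"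
    unfolding smplx_def
    by (intro closed_Collect_conj closed_Collect_all closed_Collect_le closed_Collect_eq continuous_intros)
  moreover have "bounded (smplx :: (real^'n::finite) set)"
  proof -
    have "smplx \<subseteq> cbox (0::real^'n) 1"
    proof
      fix y :: "real^'n" assume "y \<in> smplx"
      then show "y \<in> cbox 0 1" using smplx_le1[OF \<open>y \<in> smplx\<close>] by (auto simp: smplx_def mem_box_cart)
    qed
    then show ?thesis using bounded_cbox bounded_subset by blast
  qed
  ultimately show ?thesis using compact_eq_bounded_closed by blast
qed

lemma smplx_convex: "convex (smplx :: (real^'n::finite) set)"
  unfolding smplx_def convex_def
  by (auto simp: sum.distrib sum_distrib_left[symmetric])

lemma smplx_ne: "(\<chi> i. 1 / real CARD('n)) \<in> (smplx :: (real^'n::finite) set)"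
  by (simp add: smplx_def)


definition nonnegv :: "real^'n::finite \<Rightarrow> bool" where
  "nonnegv y \<longleftrightarrow> (\<forall>i. 0 \<le> y$i)"

lemma smplx_nonneg: "y \<in> smplx \<Longrightarrow> nonnegv y"
  by (simp add: smplx_def nonnegv_def)

lemma brouwer_step:
  fixes G :: "real^'n::finite \<Rightarrow> real^'n"
  assumes nonneg: "\<And>y. nonnegv y \<Longrightarrow> nonnegv (G y)"
    and cont: "continuous_on {y. nonnegv y} G"
    and dpos: "\<delta> > 0"
  shows "\<exists>y \<mu>. y \<in> smplx \<and> \<mu> > 0 \<and> (\<forall>i. y$i > 0) \<and>
     (\<chi> l. max (G y $ l) \<delta>) = \<mu> *\<^sub>R y"
proof -
  define Gd where "Gd y = (\<chi> l. max (G y $ l) (\<delta> * (\<Sum>i\<in>UNIV. y$i)))" for y :: "real^'n"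
  define F where "F y = (1 / (\<Sum>l\<in>UNIV. Gd y $ l)) *\<^sub>R Gd y" for y
  have Gdpos: "Gd y $ l \<ge> \<delta>" if "y \<in> smplx" for y l
    using that by (auto simp: Gd_def smplx_def)
  have sumpos: "(\<Sum>l\<in>UNIV. Gd y $ l) > 0" if "y \<in> smplx" for y
  proof -
    have "(\<Sum>l\<in>UNIV. Gd y $ l) \<ge> (\<Sum>l\<in>(UNIV::'n set). \<delta>)"
      by (rule sum_mono) (use Gdpos that in auto)
    moreover have "(\<Sum>l\<in>(UNIV::'n set). \<delta>) > 0" using dpos by simp
    ultimately show ?thesis by linarith
  qed
  have contG: "continuous_on smplx G"
    by (rule continuous_on_subset[OF cont]) (auto simp: smplx_nonneg)
  have contGd: "continuous_on smplx Gd"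
    unfolding Gd_def
    by (intro continuous_on_vec_lambda continuous_intros continuous_on_compose2[OF _ contG]) auto
  have contF: "continuous_on smplx F"
    unfolding F_def
    using sumpos
    by (intro continuous_intros contGd) (metis less_irrefl)
  have Fim: "F \<in> smplx \<rightarrow> smplx"
  proof
    fix y :: "real^'n" assume y: "y \<in> smplx"
    have "0 \<le> F y $ i" for i
      using Gdpos[OF y, of i] sumpos[OF y] dpos unfolding F_def vector_scaleR_component real_scaleR_def
      by (intro mult_nonneg_nonneg) auto
    moreover have "(\<Sum>i\<in>UNIV. F y $ i) = 1"
    proof -
      have "(\<Sum>i\<in>UNIV. F y $ i) = (1 / (\<Sum>l\<in>UNIV. Gd y $ l)) * (\<Sum>i\<in>UNIV. Gd y $ i)"
        unfolding F_def vector_scaleR_component real_scaleR_def sum_distrib_left ..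
      then show ?thesis using sumpos[OF y] by simp
    qed
    ultimately show "F y \<in> smplx" by (simp add: smplx_def)
  qed
  obtain y :: "real^'n" where y: "y \<in> smplx" "F y = y"
    using brouwer[OF smplx_compact smplx_convex _ contF Fim] smplx_ne[where 'n='n] by (metis empty_iff)
  define \<mu> where "\<mu> = (\<Sum>l\<in>UNIV. Gd y $ l)"
  have mu: "\<mu> > 0" using sumpos[OF y(1)] by (simp add: \<mu>_def)
  have eq: "Gd y = \<mu> *\<^sub>R y"
  proof -
    have "\<mu> *\<^sub>R y = \<mu> *\<^sub>R F y" using y by simp
    also have "\<dots> = (\<mu> * (1/\<mu>)) *\<^sub>R Gd y" unfolding F_def \<mu>_def[symmetric] by simp
    also have "\<dots> = Gd y" using mu by simp
    finally show ?thesis by simp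
  qed
  have ypos: "y$i > 0" for i
  proof -
    have "\<mu> * y$i = Gd y $ i" using eq by simp
    then have "\<mu> * y$i > 0" using Gdpos[OF y(1), of i] dpos by linarith
    then show ?thesis using mu by (simp add: zero_less_mult_iff)
  qed
  have "(\<Sum>i\<in>UNIV. y$i) = 1" using y(1) by (simp add: smplx_def)
  then have "(\<chi> l. max (G y $ l) \<delta>) = Gd y"
    unfolding Gd_def by simp
  then show ?thesis using y(1) mu ypos eq by metis
qed


lemma sub_eigen_bound:
  fixes G :: "real^'n::finite \<Rightarrow> real^'n"
  assumes mono: "\<And>y z i. nonnegv y \<Longrightarrow> (\<forall>i. y$i \<le> z$i) \<Longrightarrow> G y $ i \<le> G z $ i"
    and hom: "\<And>c y. c > 0 \<Longrightarrow> nonnegv y \<Longrightarrow> G (c *\<^sub>R y) = c *\<^sub>R G y"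
    and ypos: "\<forall>i. y$i > 0" and mu: "\<mu> > 0"
    and eig: "\<And>l. max (G y $ l) \<delta> = \<mu> * y$l"
    and z: "nonnegv z" "z \<noteq> 0" and sub: "\<forall>i. \<theta> * z$i \<le> G z $ i"
  shows "\<theta> \<le> \<mu>"
proof (cases "\<theta> \<le> 0")
  case True then show ?thesis using mu by simp
next
  case False
  define c where "c = Max (range (\<lambda>l. z$l / y$l))"
  have "c \<in> range (\<lambda>l. z$l / y$l)" unfolding c_def by (rule Max_in) auto
  then obtain l0 where l0: "c = z$l0 / y$l0" by auto
  have cge: "z$l / y$l \<le> c" for l unfolding c_def by (rule Max_ge) auto
  have zle: "z$l \<le> c * y$l" for l using cge[of l] ypos by (simp add: divide_le_eq)
  obtain l1 where "z$l1 \<noteq> 0" using z(2) by (metis vec_eq_iff zero_index)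
  then have "z$l1 > 0" using z(1) by (simp add: nonnegv_def less_le)
  then have cpos: "c > 0" using cge[of l1] ypos[rule_format, of l1]
    by (meson divide_pos_pos less_le_trans)
  have yn: "nonnegv y" using ypos by (simp add: nonnegv_def less_imp_le)
  have "\<theta> * z$l0 \<le> G z $ l0" using sub by blast
  also have "\<dots> \<le> G (c *\<^sub>R y) $ l0" by (rule mono[OF z(1)]) (simp add: zle)
  also have "\<dots> = c * G y $ l0" using hom[OF cpos yn] by simp
  also have "\<dots> \<le> c * (\<mu> * y$l0)" using eig[of l0] cpos
    by (metis max.cobounded1 mult_left_mono less_imp_le)
  finally have "\<theta> * (c * y$l0) \<le> \<mu> * (c * y$l0)"
    using l0 ypos[rule_format, of l0] by (simp add: field_simps)
  moreover have "c * y$l0 > 0" using cpos ypos by simp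
  ultimately show ?thesis by (meson mult_le_cancel_right_pos)
qed

lemma pf_generic:
  fixes G :: "real^'n::finite \<Rightarrow> real^'n"
  assumes nonneg: "\<And>y. nonnegv y \<Longrightarrow> nonnegv (G y)"
    and mono: "\<And>y z i. nonnegv y \<Longrightarrow> (\<forall>i. y$i \<le> z$i) \<Longrightarrow> G y $ i \<le> G z $ i"
    and hom: "\<And>c y. c > 0 \<Longrightarrow> nonnegv y \<Longrightarrow> G (c *\<^sub>R y) = c *\<^sub>R G y"
    and cont: "continuous_on {y. nonnegv y} G"
  shows "\<exists>y0 \<mu>0. y0 \<in> smplx \<and> \<mu>0 \<ge> 0 \<and> G y0 = \<mu>0 *\<^sub>R y0 \<and>
     (\<forall>z \<theta>. nonnegv z \<longrightarrow> z \<noteq> 0 \<longrightarrow> (\<forall>i. \<theta> * z$i \<le> G z $ i) \<longrightarrow> \<theta> \<le> \<mu>0)"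
proof -
  define dl where "dl k = inverse (real (Suc k))" for k
  have dlpos: "dl k > 0" for k by (simp add: dl_def)
  have "\<forall>k. \<exists>p. fst p \<in> smplx \<and> snd p > 0 \<and> (\<forall>i. fst p $ i > 0) \<and>
     (\<chi> l. max (G (fst p) $ l) (dl k)) = snd p *\<^sub>R fst p"
    using brouwer_step[OF nonneg cont dlpos] by auto
  then obtain p where p: "\<And>k. fst (p k) \<in> smplx" "\<And>k. snd (p k) > 0" "\<And>k i. fst (p k) $ i > 0"
    "\<And>k. (\<chi> l. max (G (fst (p k)) $ l) (dl k)) = snd (p k) *\<^sub>R fst (p k)"
    by metis
  have eigk: "max (G (fst (p k)) $ l) (dl k) = snd (p k) * fst (p k) $ l" for k l
    using arg_cong[OF p(4)[of k], of "\<lambda>v. v $ l"] by simp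
  define B where "B = (\<Sum>l\<in>UNIV. G 1 $ l + 1)"
  have muB: "snd (p k) \<le> B" for k
  proof -
    have "snd (p k) = snd (p k) * (\<Sum>l\<in>UNIV. fst (p k) $ l)" using p(1)[of k] by (simp add: smplx_def)
    also have "\<dots> = (\<Sum>l\<in>UNIV. max (G (fst (p k)) $ l) (dl k))" by (simp add: eigk sum_distrib_left)
    also have "\<dots> \<le> B" unfolding B_def
    proof (rule sum_mono)
      fix l
      have "G (fst (p k)) $ l \<le> G 1 $ l"
        by (rule mono) (use p(1)[of k] smplx_nonneg smplx_le1 in auto)
      moreover have "0 \<le> G 1 $ l" using nonneg[of 1] by (simp add: nonnegv_def)
      moreover have "dl k \<le> 1" unfolding dl_def by (simp add: inverse_le_1_iff)
      ultimately show "max (G (fst (p k)) $ l) (dl k) \<le> G 1 $ l + 1" by simp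
    qed
    finally show ?thesis .
  qed
  have bnd: "\<theta> \<le> snd (p k)" if "nonnegv z" "z \<noteq> 0" "\<forall>i. \<theta> * z$i \<le> G z $ i" for z \<theta> k
    by (rule sub_eigen_bound[OF mono hom _ p(2) eigk that]) (use p(3) in auto)
  have cpt: "seq_compact (smplx \<times> {0..B})"
    by (intro compact_imp_seq_compact compact_Times smplx_compact compact_Icc)
  have inS: "\<forall>k. p k \<in> smplx \<times> {0..B}"
    using p(1,2) muB by (auto simp: mem_Times_iff less_imp_le)
  obtain q r where q: "q \<in> smplx \<times> {0..B}" and r: "strict_mono r" and lim: "(p \<circ> r) \<longlonglongrightarrow> q"
    using cpt inS unfolding seq_compact_def by metis
  define y0 where "y0 = fst q"
  define m0 where "m0 = snd q"
  have y0: "y0 \<in> smplx" and m0: "m0 \<ge> 0" using q by (auto simp: y0_def m0_def mem_Times_iff)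
  have limy: "(\<lambda>k. fst (p (r k))) \<longlonglongrightarrow> y0"
    using tendsto_fst[OF lim] by (simp add: y0_def o_def)
  have limm: "(\<lambda>k. snd (p (r k))) \<longlonglongrightarrow> m0"
    using tendsto_snd[OF lim] by (simp add: m0_def o_def)
  have limG: "(\<lambda>k. G (fst (p (r k)))) \<longlonglongrightarrow> G y0"
    by (rule continuous_on_tendsto_compose[OF cont limy])
       (use y0 p(1) smplx_nonneg in \<open>auto intro!: always_eventually\<close>)
  have limd: "(\<lambda>k. dl (r k)) \<longlonglongrightarrow> 0"
    using LIMSEQ_subseq_LIMSEQ[OF LIMSEQ_inverse_real_of_nat r] by (simp add: dl_def o_def)
  have eq0: "G y0 $ l = m0 * y0 $ l" for l
  proof -
    have a: "(\<lambda>k. max (G (fst (p (r k))) $ l) (dl (r k))) \<longlonglongrightarrow> max (G y0 $ l) 0"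
      by (intro tendsto_max tendsto_vec_nth limG limd)
    have b: "(\<lambda>k. snd (p (r k)) * fst (p (r k)) $ l) \<longlonglongrightarrow> m0 * y0 $ l"
      by (intro tendsto_mult tendsto_vec_nth limy limm)
    have "max (G y0 $ l) 0 = m0 * y0 $ l"
      using LIMSEQ_unique[OF a] b eigk by simp
    moreover have "G y0 $ l \<ge> 0" using nonneg[OF smplx_nonneg[OF y0]] by (simp add: nonnegv_def)
    ultimately show ?thesis by simp
  qed
  have "G y0 = m0 *\<^sub>R y0" by (simp add: vec_eq_iff eq0)
  moreover have "\<theta> \<le> m0" if "nonnegv z" "z \<noteq> 0" "\<forall>i. \<theta> * z$i \<le> G z $ i" for z \<theta>
    by (rule LIMSEQ_le_const[OF limm]) (use bnd[OF that] in auto)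
  ultimately show ?thesis using y0 m0 by blast
qed


locale tsetup =
  fixes V :: "'n::finite \<Rightarrow> ('n \<Rightarrow> ereal) set"
  assumes fin: "finite (\<Union>i. V i)"
    and vecs: "\<And>i v. v \<in> V i \<Longrightarrow> tvec v \<and> v \<noteq> allneg"
    and cover: "\<And>l. \<exists>i. \<exists>v\<in>V i. v l \<noteq> - \<infinity>"
begin

lemma finV: "finite (V i)" using fin by (rule finite_subset[rotated]) auto

lemma vfin: "v \<in> V i \<Longrightarrow> v j \<noteq> \<infinity>" using vecs by (auto simp: tvec_def)

definition Il :: "'n \<Rightarrow> 'n set" where "Il l = {i. \<exists>v\<in>V i. v l \<noteq> -\<infinity>}"
definition Ks :: "'n \<Rightarrow> 'n \<Rightarrow> ('n \<Rightarrow> ereal) set" where "Ks i l = {v \<in> V i. v l \<noteq> -\<infinity>}"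

definition Hf :: "'n \<Rightarrow> 'n \<Rightarrow> real^'n \<Rightarrow> real" where
  "Hf i l y = (if l = i then
      Min ((\<lambda>v. Max (insert 0 ((\<lambda>j. E (v j) * y$j) ` {j. j \<noteq> i})) / E (v i)) ` Ks i i)
    else Min ((\<lambda>v. E (v i) / E (v l)) ` Ks i l) * y$i)"

definition Gf :: "real^'n \<Rightarrow> real^'n" where
  "Gf y = (\<chi> l. Min ((\<lambda>i. Hf i l y) ` Il l))"

lemma Il_ne: "Il l \<noteq> {}" using cover by (auto simp: Il_def)
lemma Ks_fin: "finite (Ks i l)" using finV by (simp add: Ks_def)
lemma Ks_ne: "i \<in> Il l \<Longrightarrow> Ks i l \<noteq> {}" by (auto simp: Il_def Ks_def)

lemma Tty_i_inf: "i \<notin> Il l \<Longrightarrow> Tty_i V i x l = \<infinity>"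
proof -
  assume "i \<notin> Il l"
  then have e1: "{- v l + v i |v. v \<in> V i \<and> v l \<noteq> - \<infinity>} = {}"
    by (auto simp: Il_def)
  have e2: "{- v i + Sup {v j + x j |j. j \<noteq> i} |v. v \<in> V i \<and> v i \<noteq> - \<infinity>} = {}" if "l = i"
    using that \<open>i \<notin> Il l\<close> by (auto simp: Il_def)
  show ?thesis
  proof (cases "l = i")
    case True
    have "Tty_i V i x l = Inf {- v i + Sup {v j + x j |j. j \<noteq> i} |v. v \<in> V i \<and> v i \<noteq> - \<infinity>}"
      unfolding Tty_i_def using True by simp
    then show ?thesis by (simp only: e2[OF True] ereal_Inf_empty')
  next
    case False
    have "Tty_i V i x l = Inf {- v l + v i |v. v \<in> V i \<and> v l \<noteq> - \<infinity>} + x i"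
      unfolding Tty_i_def using False by simp
    then show ?thesis by (simp only: e1 ereal_Inf_empty' ereal_infty_less_eq PInfty_eq_infinity) simp
  qed
qed

lemma Sup_part:
  assumes v: "v \<in> V i" and x: "tvec x"
  shows "Sup {v j + x j |j. j \<noteq> i} \<noteq> \<infinity> \<and>
    E (Sup {v j + x j |j. j \<noteq> i}) = Max (insert 0 ((\<lambda>j. E (v j) * E (x j)) ` {j. j \<noteq> i}))"
proof (cases "{j::'n. j \<noteq> i} = {}")
  case True
  then have "{v j + x j |j. j \<noteq> i} = {}" by auto
  then have S: "Sup {v j + x j |j. j \<noteq> i} = -\<infinity>" by (simp only: ereal_Sup_empty')
  show ?thesis unfolding S using True by simp
next
  case False
  have eq: "{v j + x j |j. j \<noteq> i} = (\<lambda>j. v j + x j) ` {j. j \<noteq> i}" by auto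
  have ninf: "\<infinity> \<notin> (\<lambda>j. v j + x j) ` {j. j \<noteq> i}"
    using vfin[OF v] x by (auto simp: tvec_def)
  have fne: "finite ((\<lambda>j. v j + x j) ` {j. j \<noteq> i})" "(\<lambda>j. v j + x j) ` {j. j \<noteq> i} \<noteq> {}"
    using False by auto
  have S: "Sup {v j + x j |j. j \<noteq> i} = Max ((\<lambda>j. v j + x j) ` {j. j \<noteq> i})"
    unfolding eq using fne by (simp add: Max_Sup)
  have "Max ((\<lambda>j. v j + x j) ` {j. j \<noteq> i}) \<in> (\<lambda>j. v j + x j) ` {j. j \<noteq> i}"
    using fne by (rule Max_in)
  then have ni: "Max ((\<lambda>j. v j + x j) ` {j. j \<noteq> i}) \<noteq> \<infinity>" using ninf by metis
  have "E (Max ((\<lambda>j. v j + x j) ` {j. j \<noteq> i})) = Max (E ` (\<lambda>j. v j + x j) ` {j. j \<noteq> i})"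
    using fne ninf by (rule E_Max)
  also have "\<dots> = Max ((\<lambda>j. E (v j) * E (x j)) ` {j. j \<noteq> i})"
    unfolding image_image using vfin[OF v] x by (simp add: E_add tvec_def)
  also have "\<dots> = Max (insert 0 ((\<lambda>j. E (v j) * E (x j)) ` {j. j \<noteq> i}))"
  proof -
    have "0 \<le> Max ((\<lambda>j. E (v j) * E (x j)) ` {j. j \<noteq> i})"
      using False by (simp add: Max_ge_iff)
    then show ?thesis using False by (simp add: Max_insert)
  qed
  finally show ?thesis using S ni by simp
qed

lemma Tty_i_eq:
  assumes x: "tvec x" and i: "i \<in> Il l"
  shows "Tty_i V i x l \<noteq> \<infinity> \<and> E (Tty_i V i x l) = Hf i l (\<chi> j. E (x j))"
proof (cases "l = i")
  case True
  define sv where "sv v = Sup {v j + x j |j. j \<noteq> i}" for v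
  have eqset: "{- v i + Sup {v j + x j |j. j \<noteq> i} |v. v \<in> V i \<and> v i \<noteq> - \<infinity>}
      = (\<lambda>v. - v i + sv v) ` Ks i i" by (auto simp: sv_def Ks_def)
  have fne: "finite ((\<lambda>v. - v i + sv v) ` Ks i i)" "(\<lambda>v. - v i + sv v) ` Ks i i \<noteq> {}"
    using Ks_fin Ks_ne[of i l] i True by auto
  have each: "- v i + sv v \<noteq> \<infinity> \<and> E (- v i + sv v) =
      Max (insert 0 ((\<lambda>j. E (v j) * E (x j)) ` {j. j \<noteq> i})) / E (v i)" if "v \<in> Ks i i" for v
  proof -
    have v: "v \<in> V i" "v i \<noteq> -\<infinity>" using that by (auto simp: Ks_def)
    have fv: "v i \<noteq> \<infinity>" using vfin[OF v(1)] .
    have mv: "- v i \<noteq> \<infinity>" using v(2) by (cases "v i") auto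
    have sp: "sv v \<noteq> \<infinity>" "E (sv v) = Max (insert 0 ((\<lambda>j. E (v j) * E (x j)) ` {j. j \<noteq> i}))"
      using Sup_part[OF v(1) x] by (auto simp: sv_def)
    have "- v i + sv v \<noteq> \<infinity>" using mv sp(1) by (cases "v i"; cases "sv v") auto
    moreover have "E (- v i + sv v) = E (- v i) * E (sv v)" using E_add[OF mv sp(1)] .
    ultimately show ?thesis using sp(2) E_uminus[OF fv v(2)] by simp
  qed
  then have ninf: "\<infinity> \<notin> (\<lambda>v. - v i + sv v) ` Ks i i" by auto
  have "Tty_i V i x l = Min ((\<lambda>v. - v i + sv v) ` Ks i i)"
    unfolding Tty_i_def using True eqset fne by (simp add: Min_Inf)
  moreover have "Min ((\<lambda>v. - v i + sv v) ` Ks i i) \<noteq> \<infinity>"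
    using Min_in[OF fne] ninf by metis
  moreover have "E (Min ((\<lambda>v. - v i + sv v) ` Ks i i)) = Hf i l (\<chi> j. E (x j))"
  proof -
    have "E (Min ((\<lambda>v. - v i + sv v) ` Ks i i)) = Min (E ` (\<lambda>v. - v i + sv v) ` Ks i i)"
      using fne ninf by (rule E_Min)
    also have "\<dots> = Min ((\<lambda>v. Max (insert 0 ((\<lambda>j. E (v j) * E (x j)) ` {j. j \<noteq> i})) / E (v i)) ` Ks i i)"
      unfolding image_image using each by (metis (no_types, lifting) image_cong)
    finally show ?thesis using True by (simp add: Hf_def)
  qed
  ultimately show ?thesis by simp
next
  case False
  define A where "A = (\<lambda>v. - v l + v i) ` Ks i l"
  have eqset: "{- v l + v i |v. v \<in> V i \<and> v l \<noteq> - \<infinity>} = A" by (auto simp: A_def Ks_def)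
  have fne: "finite A" "A \<noteq> {}" using Ks_fin Ks_ne[OF i] by (auto simp: A_def)
  have each: "- v l + v i \<noteq> \<infinity> \<and> E (- v l + v i) = E (v i) / E (v l)" if "v \<in> Ks i l" for v
  proof -
    have v: "v \<in> V i" "v l \<noteq> -\<infinity>" using that by (auto simp: Ks_def)
    have mv: "- v l \<noteq> \<infinity>" using v(2) by (cases "v l") auto
    have "- v l + v i \<noteq> \<infinity>" using mv vfin[OF v(1), of i] by (cases "v l"; cases "v i") auto
    then show ?thesis using E_add[OF mv vfin[OF v(1), of i]] E_uminus[OF vfin[OF v(1), of l] v(2)] by simp
  qed
  then have ninf: "\<infinity> \<notin> A" by (auto simp: A_def)
  have M: "Min A \<noteq> \<infinity>" using Min_in[OF fne] ninf by metis
  have xi: "x i \<noteq> \<infinity>" using x by (simp add: tvec_def)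
  have "Tty_i V i x l = Min A + x i"
    unfolding Tty_i_def using False eqset fne by (simp add: Min_Inf)
  moreover have "Min A + x i \<noteq> \<infinity>" using M xi by (cases "Min A"; cases "x i") auto
  moreover have "E (Min A + x i) = Hf i l (\<chi> j. E (x j))"
  proof -
    have "E (Min A + x i) = E (Min A) * E (x i)" using E_add[OF M xi] .
    also have "E (Min A) = Min (E ` A)" using fne ninf by (rule E_Min)
    also have "\<dots> = Min ((\<lambda>v. E (v i) / E (v l)) ` Ks i l)"
      unfolding A_def image_image using each by (metis (no_types, lifting) image_cong)
    finally show ?thesis using False by (simp add: Hf_def)
  qed
  ultimately show ?thesis by simp
qed

lemma Tty_eq:
  assumes x: "tvec x"
  shows "Tty V x l \<noteq> \<infinity> \<and> E (Tty V x l) = Gf (\<chi> j. E (x j)) $ l"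
proof -
  define f where "f i = Tty_i V i x l" for i
  have fne: "finite (f ` Il l)" "f ` Il l \<noteq> {}" using Il_ne by auto
  have ninf: "\<infinity> \<notin> f ` Il l"
  proof
    assume "\<infinity> \<in> f ` Il l"
    then obtain i where "i \<in> Il l" "f i = \<infinity>" by auto
    then show False using Tty_i_eq[OF x, of i l] by (simp add: f_def)
  qed
  have "Tty V x l = Min (f ` Il l)"
  proof (rule antisym)
    show "Tty V x l \<le> Min (f ` Il l)"
      unfolding Tty_def f_def using fne by (auto intro!: INF_lower simp: Min_ge_iff f_def)
    show "Min (f ` Il l) \<le> Tty V x l"
      unfolding Tty_def
    proof (rule INF_greatest)
      fix i
      show "Min (f ` Il l) \<le> Tty_i V i x l"
      proof (cases "i \<in> Il l")
        case True then show ?thesis using fne by (simp add: f_def)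
      next
        case False then show ?thesis using Tty_i_inf by simp
      qed
    qed
  qed
  moreover have "Min (f ` Il l) \<noteq> \<infinity>" using Min_in[OF fne] ninf by metis
  moreover have "E (Min (f ` Il l)) = Gf (\<chi> j. E (x j)) $ l"
  proof -
    have "E (Min (f ` Il l)) = Min (E ` f ` Il l)" using fne ninf by (rule E_Min)
    also have "\<dots> = Min ((\<lambda>i. Hf i l (\<chi> j. E (x j))) ` Il l)"
      unfolding image_image using Tty_i_eq[OF x] by (metis (no_types, lifting) f_def image_cong)
    finally show ?thesis by (simp add: Gf_def)
  qed
  ultimately show ?thesis by simp
qed


lemma Max_ins0_mono:
  fixes f g :: "'a \<Rightarrow> real"
  assumes "finite J" "\<And>j. j \<in> J \<Longrightarrow> f j \<le> g j"
  shows "Max (insert 0 (f ` J)) \<le> Max (insert 0 (g ` J))"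
proof -
  have "a \<le> Max (insert 0 (g ` J))" if "a \<in> insert 0 (f ` J)" for a
  proof -
    from that consider "a = 0" | j where "j \<in> J" "a = f j" by auto
    then show ?thesis
    proof cases
      case 1 then show ?thesis using assms by (intro Max_ge) auto
    next
      case 2
      have "g j \<le> Max (insert 0 (g ` J))" using assms 2 by (intro Max_ge) auto
      then show ?thesis using assms(2)[OF 2(1)] 2 by simp
    qed
  qed
  then show ?thesis using assms by (subst Max_le_iff) auto
qed

lemma Max_ins0_nonneg: "finite J \<Longrightarrow> 0 \<le> Max (insert (0::real) (f ` J))"
  by (intro Max_ge) auto

lemma cmult_Max_ins0:
  fixes f :: "'a \<Rightarrow> real"
  assumes "finite J" "c > 0"
  shows "Max (insert 0 ((\<lambda>j. c * f j) ` J)) = c * Max (insert 0 (f ` J))"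
proof -
  have m: "mono ((*) c)" using assms by (auto intro!: monoI mult_left_mono)
  have "c * Max (insert 0 (f ` J)) = Max ((*) c ` insert 0 (f ` J))"
    using assms by (intro mono_Max_commute[OF m]) auto
  also have "(*) c ` insert 0 (f ` J) = insert 0 ((\<lambda>j. c * f j) ` J)" by auto
  finally show ?thesis by simp
qed

lemma cmult_Min:
  fixes f :: "'a \<Rightarrow> real"
  assumes "finite K" "K \<noteq> {}" "c > 0"
  shows "Min ((\<lambda>k. c * f k) ` K) = c * Min (f ` K)"
proof -
  have m: "mono ((*) c)" using assms by (auto intro!: monoI mult_left_mono)
  have "c * Min (f ` K) = Min ((*) c ` f ` K)"
    using assms by (intro mono_Min_commute[OF m]) auto
  then show ?thesis by (simp add: image_image)
qed

lemma Hf_nonneg: "nonnegv y \<Longrightarrow> i \<in> Il l \<Longrightarrow> 0 \<le> Hf i l y"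
proof -
  assume y: "nonnegv y" and i: "i \<in> Il l"
  show ?thesis
  proof (cases "l = i")
    case True
    have "0 \<le> Min ((\<lambda>v. Max (insert 0 ((\<lambda>j. E (v j) * y$j) ` {j. j \<noteq> i})) / E (v i)) ` Ks i i)"
      using Ks_fin Ks_ne[OF i] True
      by (subst Min_ge_iff) (auto intro!: divide_nonneg_nonneg Max_ins0_nonneg)
    then show ?thesis using True by (simp add: Hf_def)
  next
    case False
    have "0 \<le> Min ((\<lambda>v. E (v i) / E (v l)) ` Ks i l)"
      using Ks_fin Ks_ne[OF i] by (subst Min_ge_iff) auto
    then show ?thesis using False y by (simp add: Hf_def nonnegv_def)
  qed
qed

lemma Gf_nonneg: "nonnegv y \<Longrightarrow> nonnegv (Gf y)"
  unfolding nonnegv_def Gf_def using Il_ne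
  by (auto simp: Min_ge_iff intro: Hf_nonneg[unfolded nonnegv_def])

lemma Hf_mono:
  assumes y: "nonnegv y" and yz: "\<forall>j. y$j \<le> z$j" and i: "i \<in> Il l"
  shows "Hf i l y \<le> Hf i l z"
proof (cases "l = i")
  case True
  have "Min ((\<lambda>v. Max (insert 0 ((\<lambda>j. E (v j) * y$j) ` {j. j \<noteq> i})) / E (v i)) ` Ks i i)
     \<le> Min ((\<lambda>v. Max (insert 0 ((\<lambda>j. E (v j) * z$j) ` {j. j \<noteq> i})) / E (v i)) ` Ks i i)"
    using Ks_fin Ks_ne[OF i] True
    by (intro Min_img_mono divide_right_mono Max_ins0_mono mult_left_mono) (auto simp: yz)
  then show ?thesis using True by (simp add: Hf_def)
next
  case False
  have "0 \<le> Min ((\<lambda>v. E (v i) / E (v l)) ` Ks i l)"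
    using Ks_fin Ks_ne[OF i] by (auto simp: Min_ge_iff)
  then show ?thesis using False yz by (simp add: Hf_def mult_left_mono)
qed

lemma Gf_mono: "nonnegv y \<Longrightarrow> \<forall>j. y$j \<le> z$j \<Longrightarrow> Gf y $ l \<le> Gf z $ l"
  unfolding Gf_def vec_lambda_beta by (rule Min_img_mono[OF _ Il_ne]) (auto intro: Hf_mono)

lemma Hf_hom: "c > 0 \<Longrightarrow> i \<in> Il l \<Longrightarrow> Hf i l (c *\<^sub>R y) = c * Hf i l y"
proof (cases "l = i")
  case True
  assume c: "c > 0" and i: "i \<in> Il l"
  have "Min ((\<lambda>v. Max (insert 0 ((\<lambda>j. E (v j) * (c *\<^sub>R y)$j) ` {j. j \<noteq> i})) / E (v i)) ` Ks i i)
     = Min ((\<lambda>v. c * (Max (insert 0 ((\<lambda>j. E (v j) * y$j) ` {j. j \<noteq> i})) / E (v i))) ` Ks i i)"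
  proof -
    have pw: "Max (insert 0 ((\<lambda>j. E (v j) * (c *\<^sub>R y)$j) ` {j. j \<noteq> i})) / E (v i)
        = c * (Max (insert 0 ((\<lambda>j. E (v j) * y$j) ` {j. j \<noteq> i})) / E (v i))" for v
    proof -
      have "(\<lambda>j. E (v j) * (c *\<^sub>R y)$j) = (\<lambda>j. c * (E (v j) * y$j))" by (auto simp: algebra_simps)
      then have "Max (insert 0 ((\<lambda>j. E (v j) * (c *\<^sub>R y)$j) ` {j. j \<noteq> i})) =
          c * Max (insert 0 ((\<lambda>j. E (v j) * y$j) ` {j. j \<noteq> i}))"
        by (simp only:) (rule cmult_Max_ins0[OF _ c], simp)
      then show ?thesis by simp
    qed
    show ?thesis by (simp only: pw)
  qed
  also have "\<dots> = c * Min ((\<lambda>v. Max (insert 0 ((\<lambda>j. E (v j) * y$j) ` {j. j \<noteq> i})) / E (v i)) ` Ks i i)"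
    using Ks_fin Ks_ne[OF i] True c by (intro cmult_Min) auto
  finally show ?thesis using True by (simp add: Hf_def)
next
  case False
  assume "c > 0"
  then show ?thesis using False by (simp add: Hf_def)
qed

lemma Gf_hom: "c > 0 \<Longrightarrow> nonnegv y \<Longrightarrow> Gf (c *\<^sub>R y) = c *\<^sub>R Gf y"
proof -
  assume c: "c > 0"
  have "Min ((\<lambda>i. Hf i l (c *\<^sub>R y)) ` Il l) = Min ((\<lambda>i. c * Hf i l y) ` Il l)" for l
    using Hf_hom[OF c] by (metis (no_types, lifting) image_cong)
  then show ?thesis unfolding Gf_def using Il_ne c
    by (simp add: vec_eq_iff cmult_Min)
qed

lemma Hf_cont: "i \<in> Il l \<Longrightarrow> continuous_on UNIV (Hf i l)"
proof (cases "l = i")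
  case True
  assume i: "i \<in> Il l"
  have cm: "continuous_on UNIV (\<lambda>y::real^'n. Max (insert 0 ((\<lambda>j. E (v j) * y$j) ` {j. j \<noteq> i})))" for v
  proof -
    define g where "g k y = (case k of None \<Rightarrow> 0 | Some j \<Rightarrow> E (v j) * y$j)" for k and y :: "real^'n"
    have eq: "Max (insert 0 ((\<lambda>j. E (v j) * y$j) ` {j. j \<noteq> i})) =
        Max ((\<lambda>k. g k y) ` insert None (Some ` {j. j \<noteq> i}))" for y
      by (simp add: g_def image_image)
    have "continuous_on UNIV (\<lambda>y. Max ((\<lambda>k. g k y) ` insert None (Some ` {j. j \<noteq> i})))"
      by (rule continuous_on_Max_img) (auto simp: g_def split: option.split intro!: continuous_intros)
    then show ?thesis unfolding eq .
  qed
  have "continuous_on UNIV (\<lambda>y::real^'n. Min ((\<lambda>v. Max (insert 0 ((\<lambda>j. E (v j) * y$j) ` {j. j \<noteq> i})) / E (v i)) ` Ks i i))"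
    using Ks_fin Ks_ne[OF i] True
  proof (intro continuous_on_Min_img)
    fix v assume "v \<in> Ks i i"
    then have "E (v i) \<noteq> 0" using E_pos_iff[of "v i"] vfin[of v i i] by (force simp: Ks_def)
    then show "continuous_on UNIV (\<lambda>y::real^'n. Max (insert 0 ((\<lambda>j. E (v j) * y$j) ` {j. j \<noteq> i})) / E (v i))"
      by (auto intro!: continuous_intros cm)
  qed auto
  then show ?thesis using True by (simp add: Hf_def[abs_def])
next
  case False
  then show ?thesis by (simp add: Hf_def[abs_def] continuous_intros)
qed

lemma Gf_cont: "continuous_on UNIV Gf"
  unfolding Gf_def[abs_def]
  using Il_ne by (intro continuous_on_vec_lambda continuous_on_Min_img Hf_cont) auto


lemma eigen_exists:
  "\<exists>u0 lam0. tvec u0 \<and> u0 \<noteq> allneg \<and> lam0 \<noteq> \<infinity> \<and> Tty V u0 = (\<lambda>l. lam0 + u0 l) \<and>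
    (\<forall>a r. tvec a \<longrightarrow> a \<noteq> allneg \<longrightarrow> (\<forall>l. ereal r + a l \<le> Tty V a l) \<longrightarrow> ereal r \<le> lam0)"
proof -
  have cont': "continuous_on {y. nonnegv y} Gf" using Gf_cont by (rule continuous_on_subset) simp
  obtain y0 \<mu>0 where y0: "y0 \<in> smplx" and m0: "\<mu>0 \<ge> 0" and eig: "Gf y0 = \<mu>0 *\<^sub>R y0"
    and bnd: "\<And>z \<theta>. nonnegv z \<Longrightarrow> z \<noteq> 0 \<Longrightarrow> (\<forall>i. \<theta> * z$i \<le> Gf z $ i) \<Longrightarrow> \<theta> \<le> \<mu>0"
    using pf_generic[OF Gf_nonneg Gf_mono Gf_hom cont'] by metis
  have y0n: "0 \<le> y0$j" for j using y0 by (simp add: smplx_def)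
  define u0 where "u0 = (\<lambda>j. Lr (y0$j))"
  define lam0 where "lam0 = Lr \<mu>0"
  have tu: "tvec u0" by (simp add: tvec_def u0_def)
  have "\<exists>j. y0$j > 0"
  proof (rule ccontr)
    assume "\<not> ?thesis"
    then have "\<forall>j. y0$j = 0" using y0n by (metis order.not_eq_order_implies_strict)
    then show False using y0 by (simp add: smplx_def)
  qed
  then obtain j where "y0$j > 0" by blast
  then have un: "u0 \<noteq> allneg" by (auto simp: u0_def allneg_def Lr_def fun_eq_iff)
  have Ey: "(\<chi> j. E (u0 j)) = y0" by (simp add: vec_eq_iff u0_def y0n)
  have T: "Tty V u0 = (\<lambda>l. lam0 + u0 l)"
  proof
    fix l
    have a: "Tty V u0 l \<noteq> \<infinity>" "E (Tty V u0 l) = \<mu>0 * y0$l"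
      using Tty_eq[OF tu, of l] eig by (auto simp: Ey)
    have b: "lam0 + u0 l \<noteq> \<infinity>" unfolding lam0_def u0_def
      using Lr_not_inf by (metis ereal_plus_eq_PInfty)
    have "E (lam0 + u0 l) = \<mu>0 * y0$l"
      unfolding lam0_def u0_def using E_add[OF Lr_not_inf Lr_not_inf] m0 y0n by simp
    then show "Tty V u0 l = lam0 + u0 l" using E_inj[OF a(1) b] a(2) by simp
  qed
  have sub: "ereal r \<le> lam0" if a: "tvec a" "a \<noteq> allneg" and le: "\<forall>l. ereal r + a l \<le> Tty V a l" for a r
  proof -
    define z where "z = (\<chi> j. E (a j))"
    have zn: "nonnegv z" by (simp add: z_def nonnegv_def)
    obtain j where j: "a j \<noteq> -\<infinity>" using a(2) by (auto simp: allneg_def fun_eq_iff)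
    have "E (a j) > 0" using E_pos_iff[of "a j"] j a(1) by (simp add: tvec_def)
    then have z0: "z \<noteq> 0" by (metis z_def vec_eq_iff vec_lambda_beta zero_index less_irrefl)
    have "exp r * z$l \<le> Gf z $ l" for l
    proof -
      have "exp r * z$l = E (ereal r + a l)" using a(1) by (simp add: z_def E_add tvec_def)
      also have "\<dots> \<le> E (Tty V a l)" using E_mono[OF le[rule_format, of l]] Tty_eq[OF a(1), of l] by simp
      also have "\<dots> = Gf z $ l" using Tty_eq[OF a(1), of l] by (simp add: z_def)
      finally show ?thesis .
    qed
    then have "exp r \<le> \<mu>0" using bnd[OF zn z0] by blast
    moreover then have "\<mu>0 > 0" by (metis exp_gt_zero less_le_trans)
    ultimately show ?thesis unfolding lam0_def Lr_def
      by (simp add: ln_ge_iff)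
  qed
  show ?thesis using tu un T sub by (metis Lr_not_inf lam0_def)
qed

end


lemma ereal_shift_le: "ereal c + x \<le> y \<longleftrightarrow> x \<le> ereal (-c) + y"
  by (cases x; cases y) auto

lemma ereal_eps_le:
  assumes "\<And>e. e > 0 \<Longrightarrow> ereal (r - e) + c \<le> X"
  shows "ereal r + c \<le> X"
proof (cases c)
  case (real q)
  have "ereal (r + q) \<le> X + ereal e" if "e > 0" for e
  proof -
    have "ereal (r - e + q) \<le> X" using assms[OF that] real by simp
    then show ?thesis by (cases X) auto
  qed
  then have "ereal (r + q) \<le> X" by (rule ereal_le_epsilon2[rule_format]) (metis ereal_less(2))
  then show ?thesis using real by simp
next
  case PInf
  then show ?thesis using assms[of 1] by simp
next
  case MInf
  then show ?thesis by simp
qed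

lemma le_Inf_plus:
  fixes X :: "ereal set"
  assumes "finite X" "x \<noteq> \<infinity>"
  shows "c \<le> Inf X + x \<longleftrightarrow> (\<forall>y\<in>X. c \<le> y + x)"
proof (cases "X = {}")
  case True then show ?thesis unfolding True ereal_Inf_empty' by simp
next
  case False
  have m: "Inf X = Min X" using Min_Inf[OF assms(1) False] by simp
  have "Min X \<in> X" using assms(1) False by simp
  moreover have "Min X + x \<le> y + x" if "y \<in> X" for y
    using Min_le[OF assms(1) that] by (rule add_right_mono)
  ultimately show ?thesis unfolding m by (meson order_trans)
qed


lemma arithA: "p \<noteq> \<infinity> \<Longrightarrow> p \<noteq> -\<infinity> \<Longrightarrow> x \<noteq> \<infinity> \<Longrightarrow>
   (ereal r + x \<le> - p + S) \<longleftrightarrow> (ereal r + (x + p) \<le> S)"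
  by (cases x; cases S; cases p) (auto simp: algebra_simps)

lemma arithB: "q \<noteq> \<infinity> \<Longrightarrow> q \<noteq> -\<infinity> \<Longrightarrow> w \<noteq> \<infinity> \<Longrightarrow> x \<noteq> \<infinity> \<Longrightarrow> y \<noteq> \<infinity> \<Longrightarrow>
   (ereal r + y \<le> (- q + w) + x) \<longleftrightarrow> (ereal r + (q + y) \<le> w + x)"
  by (cases x; cases y; cases q; cases w) (auto simp: algebra_simps)

definition LC :: "('n \<Rightarrow> ereal) \<Rightarrow> 'n \<Rightarrow> ('n \<Rightarrow> ereal) \<Rightarrow> real \<Rightarrow> bool" where
  "LC a i v r \<longleftrightarrow> (v i \<noteq> -\<infinity> \<longrightarrow> ereal r + (a i + v i) \<le> Sup {v j + a j |j. j \<noteq> i}) \<and>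
     (\<forall>l. l \<noteq> i \<longrightarrow> v l \<noteq> -\<infinity> \<longrightarrow> ereal r + (v l + a l) \<le> v i + a i)"

context tsetup begin

lemma subeig_i:
  assumes a: "tvec a"
  shows "(\<forall>l. ereal r + a l \<le> Tty_i V i a l) \<longleftrightarrow> (\<forall>v\<in>V i. LC a i v r)"
proof -
  have ai: "a j \<noteq> \<infinity>" for j using a by (simp add: tvec_def)
  have Pi: "ereal r + a i \<le> Tty_i V i a i \<longleftrightarrow>
      (\<forall>v\<in>V i. v i \<noteq> -\<infinity> \<longrightarrow> ereal r + (a i + v i) \<le> Sup {v j + a j |j. j \<noteq> i})"
  proof -
    have "ereal r + a i \<le> Tty_i V i a i \<longleftrightarrow>
        (\<forall>v\<in>V i. v i \<noteq> -\<infinity> \<longrightarrow> ereal r + a i \<le> - v i + Sup {v j + a j |j. j \<noteq> i})"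
      unfolding Tty_i_def by (auto simp: le_Inf_iff)
    also have "\<dots> \<longleftrightarrow> (\<forall>v\<in>V i. v i \<noteq> -\<infinity> \<longrightarrow> ereal r + (a i + v i) \<le> Sup {v j + a j |j. j \<noteq> i})"
      using arithA[OF vfin _ ai] by (metis (no_types, lifting))
    finally show ?thesis .
  qed
  have Pl: "ereal r + a l \<le> Tty_i V i a l \<longleftrightarrow>
      (\<forall>v\<in>V i. v l \<noteq> -\<infinity> \<longrightarrow> ereal r + (v l + a l) \<le> v i + a i)" if "l \<noteq> i" for l
  proof -
    define X where "X = (\<lambda>v. - v l + v i) ` {v \<in> V i. v l \<noteq> - \<infinity>}"
    have X: "{- v l + v i |v. v \<in> V i \<and> v l \<noteq> - \<infinity>} = X" by (auto simp: X_def)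
    have fX: "finite X" using finV by (simp add: X_def)
    have "ereal r + a l \<le> Tty_i V i a l \<longleftrightarrow> (\<forall>y\<in>X. ereal r + a l \<le> y + a i)"
      unfolding Tty_i_def using that X le_Inf_plus[OF fX ai] by simp
    also have "\<dots> \<longleftrightarrow> (\<forall>v\<in>V i. v l \<noteq> -\<infinity> \<longrightarrow> ereal r + (v l + a l) \<le> v i + a i)"
      unfolding X_def using arithB[OF vfin _ vfin ai ai] by auto
    finally show ?thesis .
  qed
  show ?thesis unfolding LC_def
  proof
    assume H: "\<forall>l. ereal r + a l \<le> Tty_i V i a l"
    show "\<forall>v\<in>V i. (v i \<noteq> - \<infinity> \<longrightarrow> ereal r + (a i + v i) \<le> Sup {v j + a j |j. j \<noteq> i}) \<and>
        (\<forall>l. l \<noteq> i \<longrightarrow> v l \<noteq> - \<infinity> \<longrightarrow> ereal r + (v l + a l) \<le> v i + a i)"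
      using H Pi Pl by blast
  next
    assume H: "\<forall>v\<in>V i. (v i \<noteq> - \<infinity> \<longrightarrow> ereal r + (a i + v i) \<le> Sup {v j + a j |j. j \<noteq> i}) \<and>
        (\<forall>l. l \<noteq> i \<longrightarrow> v l \<noteq> - \<infinity> \<longrightarrow> ereal r + (v l + a l) \<le> v i + a i)"
    show "\<forall>l. ereal r + a l \<le> Tty_i V i a l"
    proof
      fix l show "ereal r + a l \<le> Tty_i V i a l"
        by (cases "l = i") (use H Pi Pl in auto)
    qed
  qed
qed

lemma subeig_iff:
  assumes a: "tvec a"
  shows "(\<forall>l. ereal r + a l \<le> Tty V a l) \<longleftrightarrow> (\<forall>i. \<forall>v\<in>V i. LC a i v r)"
proof -
  have "(\<forall>l. ereal r + a l \<le> Tty V a l) \<longleftrightarrow> (\<forall>i l. ereal r + a l \<le> Tty_i V i a l)"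
    unfolding Tty_def by (auto simp: le_INF_iff)
  then show ?thesis using subeig_i[OF a] by blast
qed


end

lemma Sup_extract:
  fixes v a :: "'n::finite \<Rightarrow> ereal"
  assumes "Sup {v j + a j |j. j \<noteq> i} \<noteq> -\<infinity>"
  shows "\<exists>j0. j0 \<noteq> i \<and> Sup {v j + a j |j. j \<noteq> i} = v j0 + a j0"
proof -
  have eq: "{v j + a j |j. j \<noteq> i} = (\<lambda>j. v j + a j) ` {j. j \<noteq> i}" by auto
  have ne: "{v j + a j |j. j \<noteq> i} \<noteq> {}"
  proof
    assume "{v j + a j |j. j \<noteq> i} = {}"
    then show False using assms by (simp only: ereal_Sup_empty')
  qed
  have fin: "finite {v j + a j |j. j \<noteq> i}" unfolding eq by simp
  have "Sup {v j + a j |j. j \<noteq> i} = Max {v j + a j |j. j \<noteq> i}" using Max_Sup[OF fin ne] by simp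
  moreover have "Max {v j + a j |j. j \<noteq> i} \<in> {v j + a j |j. j \<noteq> i}" using fin ne by (rule Max_in)
  ultimately show ?thesis by auto
qed

lemma hd_le:
  assumes "\<forall>l. ereal mu + y l \<le> v l \<and> v l \<le> ereal lam + y l"
  shows "hilbert_d v y \<le> ereal (lam - mu)"
  unfolding hilbert_d_def by (rule Inf_lower) (use assms in blast)

lemma LC_mono: "LC a i v r \<Longrightarrow> r' \<le> r \<Longrightarrow> LC a i v r'"
proof -
  assume L: "LC a i v r" and r: "r' \<le> r"
  have m: "ereal r' + x \<le> ereal r + x" for x using r by (intro add_right_mono) simp
  show ?thesis using L m unfolding LC_def by (meson order_trans)
qed

lemma LC_eps: "(\<And>e. e > 0 \<Longrightarrow> LC a i v (r - e)) \<Longrightarrow> LC a i v r"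
proof -
  assume H: "\<And>e. e > 0 \<Longrightarrow> LC a i v (r - e)"
  have 1: "ereal r + (a i + v i) \<le> Sup {v j + a j |j. j \<noteq> i}" if "v i \<noteq> -\<infinity>"
    by (rule ereal_eps_le) (use H that in \<open>simp add: LC_def\<close>)
  have 2: "ereal r + (v l + a l) \<le> v i + a i" if "l \<noteq> i" "v l \<noteq> -\<infinity>" for l
    by (rule ereal_eps_le) (use H that in \<open>simp add: LC_def\<close>)
  show ?thesis unfolding LC_def using 1 2 by blast
qed

lemma witness_LC:
  assumes y: "y \<in> hyp i a" and a: "tvec a"
    and b: "\<forall>l. ereal mu + y l \<le> v l \<and> v l \<le> ereal lam + y l"
  shows "LC a i v (mu - lam)"
proof -
  have Sy: "a i + y i = Sup {a j + y j |j. j \<noteq> i}" using y by (simp add: hyp_def)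
  have h1: "y j \<le> ereal (-mu) + v j" for j using b ereal_shift_le by blast
  have h2: "v j \<le> ereal lam + y j" for j using b by blast
  define Sv where "Sv = Sup {v j + a j |j. j \<noteq> i}"
  have part_b: "ereal (mu - lam) + (v l + a l) \<le> v i + a i" if "l \<noteq> i" for l
  proof -
    have "v l + a l \<le> (ereal lam + y l) + a l" using h2 by (rule add_right_mono)
    also have "\<dots> = ereal lam + (a l + y l)" by (simp add: ac_simps)
    also have "\<dots> \<le> ereal lam + Sup {a j + y j |j. j \<noteq> i}"
      by (rule add_left_mono, rule Sup_upper) (use that in blast)
    also have "\<dots> = ereal lam + (a i + y i)" using Sy by simp
    also have "\<dots> \<le> ereal lam + (a i + (ereal (-mu) + v i))"
      by (intro add_left_mono h1)
    also have "\<dots> = ereal (lam - mu) + (v i + a i)"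
    proof -
      have "ereal lam + (a i + (ereal (-mu) + v i)) = (ereal lam + ereal (-mu)) + (v i + a i)"
        by (simp only: ac_simps)
      then show ?thesis by simp
    qed
    finally show ?thesis using ereal_shift_le by simp
  qed
  have SyS: "Sup {a j + y j |j. j \<noteq> i} \<le> ereal (-mu) + Sv"
  proof (rule Sup_least)
    fix z assume "z \<in> {a j + y j |j. j \<noteq> i}"
    then obtain j where j: "j \<noteq> i" "z = a j + y j" by auto
    have "a j + y j \<le> a j + (ereal (-mu) + v j)" by (intro add_left_mono h1)
    also have "\<dots> = ereal (-mu) + (v j + a j)" by (simp add: ac_simps)
    also have "\<dots> \<le> ereal (-mu) + Sv" unfolding Sv_def
      by (rule add_left_mono, rule Sup_upper) (use j in blast)
    finally show "z \<le> ereal (-mu) + Sv" using j by simp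
  qed
  have part_a: "ereal (mu - lam) + (a i + v i) \<le> Sv"
  proof -
    have "a i + v i \<le> a i + (ereal lam + y i)" by (intro add_left_mono h2)
    also have "\<dots> = ereal lam + (a i + y i)" by (simp add: ac_simps)
    also have "\<dots> \<le> ereal lam + (ereal (-mu) + Sv)" using Sy SyS by (simp add: add_left_mono)
    also have "\<dots> = ereal (lam - mu) + Sv" by (simp add: add.assoc[symmetric])
    finally show ?thesis using ereal_shift_le by simp
  qed
  show ?thesis unfolding LC_def using part_a part_b by (simp add: Sv_def)
qed



lemma dist_imp_LC:
  assumes a: "tvec a" and le: "(INF y\<in>hyp i a. hilbert_d v y) \<le> ereal d"
  shows "LC a i v (-d)"
proof (rule LC_eps)
  fix e :: real assume e: "e > 0"
  have "(INF y\<in>hyp i a. hilbert_d v y) < ereal (d + e)"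
    using le_less_trans[OF le, of "ereal (d + e)"] e by simp
  then obtain y where y: "y \<in> hyp i a" "hilbert_d v y < ereal (d + e)"
    by (auto simp: INF_less_iff)
  then obtain lam mu where lm: "ereal (lam - mu) < ereal (d + e)"
    "\<forall>l. ereal mu + y l \<le> v l \<and> v l \<le> ereal lam + y l"
    unfolding hilbert_d_def by (auto simp: Inf_less_iff)
  have "LC a i v (mu - lam)" by (rule witness_LC[OF y(1) a lm(2)])
  then show "LC a i v (-d - e)" by (rule LC_mono) (use lm(1) in simp)
qed

context tsetup begin

lemma LC_fin:
  assumes a: "tvec a" and v: "v \<in> V i" and L: "LC a i v r" and P: "a i + v i \<noteq> -\<infinity>"
  shows "\<exists>\<alpha> \<beta> s. a i = ereal \<alpha> \<and> v i = ereal \<beta> \<and> Sup {v j + a j |j. j \<noteq> i} = ereal s \<and>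
     r + \<alpha> + \<beta> \<le> s \<and> r + s \<le> \<beta> + \<alpha>"
proof -
  have vf: "v j \<noteq> \<infinity>" for j using vfin[OF v] .
  have af: "a j \<noteq> \<infinity>" for j using a by (simp add: tvec_def)
  obtain \<alpha> \<beta> where ab: "a i = ereal \<alpha>" "v i = ereal \<beta>"
    using P af[of i] vf[of i] by (cases "a i"; cases "v i") auto
  define Sv where "Sv = Sup {v j + a j |j. j \<noteq> i}"
  have la: "ereal r + ereal (\<alpha> + \<beta>) \<le> Sv" using L ab by (simp add: Sv_def LC_def)
  then have Sn: "Sv \<noteq> -\<infinity>" by auto
  then obtain j0 where j0: "j0 \<noteq> i" "Sv = v j0 + a j0" using Sup_extract unfolding Sv_def by blast
  have vj0: "v j0 \<noteq> -\<infinity>" using j0 Sn af[of j0] by auto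
  have lb: "ereal r + Sv \<le> ereal (\<beta> + \<alpha>)" using L j0 vj0 ab by (simp add: LC_def)
  then obtain s where s: "Sv = ereal s" using Sn by (cases Sv) auto
  have "r + \<alpha> + \<beta> \<le> s" "r + s \<le> \<beta> + \<alpha>" using la lb s by auto
  then show ?thesis using ab s by (auto simp: Sv_def)
qed

lemma r_nonpos:
  assumes a: "tvec a" "a \<noteq> allneg" and L: "\<forall>i. \<forall>v\<in>V i. LC a i v r"
  shows "r \<le> 0"
proof -
  have af: "a j \<noteq> \<infinity>" for j using a by (simp add: tvec_def)
  obtain l where l: "a l \<noteq> -\<infinity>" using a(2) by (auto simp: allneg_def fun_eq_iff)
  obtain i v where v: "v \<in> V i" "v l \<noteq> -\<infinity>" using cover by blast
  have "a i + v i \<noteq> -\<infinity>"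
  proof (cases "l = i")
    case True then show ?thesis using l v af[of l] vfin[OF v(1), of l] by (cases "a l"; cases "v l") auto
  next
    case False
    have "ereal r + (v l + a l) \<le> v i + a i" using L v False by (auto simp: LC_def)
    moreover have "v l + a l \<noteq> -\<infinity>" using l v af[of l] vfin[OF v(1), of l] by (cases "a l"; cases "v l") auto
    ultimately have "v i + a i \<noteq> -\<infinity>" using af[of i] vfin[OF v(1), of i]
      by (cases "v l + a l"; cases "a i"; cases "v i") auto
    then show ?thesis by (simp add: add.commute)
  qed
  then show ?thesis using LC_fin[OF a(1) v(1)] L v(1) by fastforce
qed

lemma LC_imp_dist:
  assumes a: "tvec a" and v: "v \<in> V i" and r: "r \<le> 0" and L: "LC a i v r"
  shows "(INF y\<in>hyp i a. hilbert_d v y) \<le> ereal (-r)"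
proof -
  have vf: "v j \<noteq> \<infinity>" for j using vfin[OF v] .
  have af: "a j \<noteq> \<infinity>" for j using a by (simp add: tvec_def)
  have tv: "tvec v" using vecs v by blast
  have Lb: "ereal r + (v l + a l) \<le> v i + a i" if "l \<noteq> i" "v l \<noteq> -\<infinity>" for l
    using L that by (auto simp: LC_def)
  show ?thesis
  proof (cases "a i + v i = -\<infinity>")
    case True
    have all: "z = -\<infinity>" if zin: "z \<in> {a j + v j |j. j \<noteq> i}" for z
    proof -
      obtain j where j: "j \<noteq> i" "z = a j + v j" using zin by auto
      show ?thesis
      proof (cases "v j = -\<infinity>")
        case True then show ?thesis using j af[of j] by simp
      next
        case False
        have "ereal r + (v j + a j) \<le> v i + a i" using Lb[OF j(1) False] .
        also have "v i + a i = -\<infinity>" using True by (simp add: add.commute)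
        finally have "v j + a j = -\<infinity>" by (cases "v j + a j") auto
        then show ?thesis using j by (simp add: add.commute)
      qed
    qed
    have "Sup {a j + v j |j. j \<noteq> i} \<le> -\<infinity>"
      by (rule Sup_least) (use all in simp)
    then have "Sup {a j + v j |j. j \<noteq> i} = -\<infinity>" by simp
    then have "v \<in> hyp i a" using True tv by (simp add: hyp_def)
    moreover have "hilbert_d v v \<le> ereal (0 - 0)" by (rule hd_le) simp
    ultimately have "(INF y\<in>hyp i a. hilbert_d v y) \<le> ereal 0" by (metis INF_lower order_trans diff_self)
    then show ?thesis using r by (meson ereal_less_eq(3) neg_0_le_iff_le order_trans)
  next
    case False
    obtain \<alpha> \<beta> s where ab: "a i = ereal \<alpha>" "v i = ereal \<beta>" and
      S: "Sup {v j + a j |j. j \<noteq> i} = ereal s" and rs: "r + \<alpha> + \<beta> \<le> s" "r + s \<le> \<beta> + \<alpha>"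
      using LC_fin[OF a v L False] by blast
    define y where "y = v(i := ereal (s - \<alpha>))"
    have yhyp: "y \<in> hyp i a"
    proof -
      have "{a j + y j |j. j \<noteq> i} = {v j + a j |j. j \<noteq> i}"
        by (auto simp: y_def add.commute)
      then have "Sup {a j + y j |j. j \<noteq> i} = ereal s" using S by simp
      moreover have "a i + y i = ereal s" using ab by (simp add: y_def)
      moreover have "tvec y" using tv by (simp add: y_def tvec_def)
      ultimately show ?thesis by (simp add: hyp_def)
    qed
    define \<delta> where "\<delta> = \<alpha> + \<beta> - s"
    have "hilbert_d v y \<le> ereal (max 0 \<delta> - min 0 \<delta>)"
    proof (rule hd_le, rule allI)
      fix l show "ereal (min 0 \<delta>) + y l \<le> v l \<and> v l \<le> ereal (max 0 \<delta>) + y l"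
      proof (cases "l = i")
        case True
        have "y l = ereal (s - \<alpha>)" "v l = ereal \<beta>" using True ab by (auto simp: y_def)
        then show ?thesis by (simp only: plus_ereal.simps(1) ereal_less_eq(3)) (auto simp: \<delta>_def min_def max_def)
      next
        case False
        then have yl: "y l = v l" by (simp add: y_def)
        show ?thesis
        proof (cases "v l")
          case (real q)
          then show ?thesis unfolding yl by (simp only: plus_ereal.simps(1) ereal_less_eq(3)) auto
        next
          case PInf then show ?thesis using vf[of l] by simp
        next
          case MInf then show ?thesis unfolding yl by (simp add: min_def max_def)
        qed
      qed
    qed
    moreover have "max 0 \<delta> - min 0 \<delta> \<le> -r" using rs r by (auto simp: \<delta>_def max_def min_def)
    ultimately have "hilbert_d v y \<le> ereal (-r)" by (meson ereal_less_eq(3) order_trans)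
    then show ?thesis using yhyp by (meson INF_lower order_trans)
  qed
qed

end


theorem theorem5p10:
  fixes V :: "'n::finite \<Rightarrow> ('n \<Rightarrow> ereal) set"
  assumes fin: "finite (\<Union>i. V i)"
    and vecs: "\<And>i v. v \<in> V i \<Longrightarrow> tvec v \<and> v \<noteq> allneg"
    and cover: "\<And>l. \<exists>i. \<exists>v\<in>V i. v l \<noteq> - \<infinity>"
    and nonempty: "\<And>i. V i \<noteq> {}"
    and disjoint: "\<And>i j. i \<noteq> j \<Longrightarrow> V i \<inter> V j = {}"
  shows "(\<forall>a. tvec a \<and> a \<noteq> allneg \<longrightarrow>
            - spec_rad (Tty V) \<le> (SUP i. distH (V i) (hyp i a)))
       \<and> (\<exists>a. tvec a \<and> a \<noteq> allneg \<and>
            (SUP i. distH (V i) (hyp i a)) = - spec_rad (Tty V))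
       \<and> (\<forall>a. tvec a \<and> a \<noteq> allneg \<and> (\<forall>l. spec_rad (Tty V) + a l \<le> Tty V a l) \<longrightarrow>
            (SUP i. distH (V i) (hyp i a)) = - spec_rad (Tty V))"
proof -
  interpret tsetup V using fin vecs cover by unfold_locales
  obtain u0 lam0 where tu: "tvec u0" and un: "u0 \<noteq> allneg" and lf: "lam0 \<noteq> \<infinity>"
    and T0: "Tty V u0 = (\<lambda>l. lam0 + u0 l)"
    and sub: "\<And>a r. tvec a \<Longrightarrow> a \<noteq> allneg \<Longrightarrow> (\<forall>l. ereal r + a l \<le> Tty V a l) \<Longrightarrow> ereal r \<le> lam0"
    using eigen_exists by metis
  have rho: "spec_rad (Tty V) = lam0"
    unfolding spec_rad_def
  proof (rule antisym)
    show "Sup {lam. lam \<noteq> \<infinity> \<and> (\<exists>u. tvec u \<and> u \<noteq> allneg \<and> Tty V u = (\<lambda>l. lam + u l))} \<le> lam0"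
    proof (rule Sup_least)
      fix lam assume "lam \<in> {lam. lam \<noteq> \<infinity> \<and> (\<exists>u. tvec u \<and> u \<noteq> allneg \<and> Tty V u = (\<lambda>l. lam + u l))}"
      then obtain u where l: "lam \<noteq> \<infinity>" "tvec u" "u \<noteq> allneg" "Tty V u = (\<lambda>l. lam + u l)" by auto
      show "lam \<le> lam0"
      proof (cases lam)
        case (real r)
        have "\<forall>l. ereal r + u l \<le> Tty V u l" using l(4) real by simp
        then show ?thesis using sub[OF l(2,3)] real by simp
      qed (use l(1) in auto)
    qed
    show "lam0 \<le> Sup {lam. lam \<noteq> \<infinity> \<and> (\<exists>u. tvec u \<and> u \<noteq> allneg \<and> Tty V u = (\<lambda>l. lam + u l))}"
      by (rule Sup_upper) (use lf tu un T0 in blast)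
  qed
  define D where "D a = (SUP i. distH (V i) (hyp i a))" for a
  have K1: "ereal (-d) \<le> lam0" if a: "tvec a" "a \<noteq> allneg" and le: "D a \<le> ereal d" for a d
  proof -
    have "\<forall>i. \<forall>v\<in>V i. LC a i v (-d)"
    proof (intro allI ballI)
      fix i v assume v: "v \<in> V i"
      have "(INF y\<in>hyp i a. hilbert_d v y) \<le> ereal d"
        using le v unfolding D_def distH_def by (auto simp: SUP_le_iff)
      then show "LC a i v (-d)" by (rule dist_imp_LC[OF a(1)])
    qed
    then show ?thesis using sub[OF a] subeig_iff[OF a(1)] by blast
  qed
  have K2: "D a \<le> ereal (-r)" if a: "tvec a" "a \<noteq> allneg" and le: "\<forall>l. ereal r + a l \<le> Tty V a l" for a r
  proof -
    have L: "\<forall>i. \<forall>v\<in>V i. LC a i v r" using le subeig_iff[OF a(1)] by blast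
    have r: "r \<le> 0" by (rule r_nonpos[OF a L])
    show ?thesis unfolding D_def distH_def
      using LC_imp_dist[OF a(1) _ r] L by (auto simp: SUP_le_iff)
  qed
  have P1: "- lam0 \<le> D a" if a: "tvec a" "a \<noteq> allneg" for a
  proof (cases "D a")
    case (real d)
    have "ereal (-d) \<le> lam0" using K1[OF a] real by simp
    then show ?thesis using real by (cases lam0) auto
  next
    case PInf then show ?thesis by simp
  next
    case MInf
    have "ereal (-d) \<le> lam0" for d using K1[OF a, of d] MInf by simp
    then have "lam0 = \<infinity>"
    proof (cases lam0)
      case (real q)
      assume h: "\<And>d. ereal (-d) \<le> lam0"
      have "ereal (q + 1) \<le> ereal q" using h[of "-(q+1)"] real by simp
      then show ?thesis by simp
    next
      case MInf
      assume h: "\<And>d. ereal (-d) \<le> lam0"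
      then show ?thesis using h[of 0] MInf by simp
    qed
    then show ?thesis using lf by simp
  qed
  have P3: "D a = - lam0" if a: "tvec a" "a \<noteq> allneg" and le: "\<forall>l. lam0 + a l \<le> Tty V a l" for a
  proof (cases lam0)
    case (real r)
    have "D a \<le> ereal (-r)" using K2[OF a] le real by simp
    then show ?thesis using P1[OF a] real by simp
  next
    case MInf
    then show ?thesis using P1[OF a] by simp
  next
    case PInf then show ?thesis using lf by simp
  qed
  have "\<forall>l. lam0 + u0 l \<le> Tty V u0 l" using T0 by simp
  then have "D u0 = - lam0" using P3[OF tu un] by blast
  then show ?thesis using P1 P3 tu un unfolding rho D_def by blast
qed


end
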